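(* For every integer $F\ge 2$, $s(F,F,1)=\dfrac{F(F-1)}{2}$.
   Context: A placement delivery array $S$-PDA$(F,K,Z)$ is an $F\times K$ array $R=(r_{j,k})$, $1\le j\le F$, $1\le k\le K$, over a finite set $S$ such that: (1) each cell is either empty or contains an element of $S$; (2) each column contains exactly $Z$ empty cells; (3) each element of $S$ occurs at most once in each row and at most once in each column; (4) if two distinct nonempty cells satisfy $r_{j_1,k_1}=r_{j_2,k_2}=t\in S$, then the cells $r_{j_1,k_2}$ and $r_{j_2,k_1}$ are empty. For integers $F,K\ge1$, $0\le Z\le F$, define $s(F,K,Z)=\min\{|S| : \text{there exists an } S\text{-PDA}(F,K,Z)\}$. *)

theory Defs
  imports Main
begin

text \<open>An F x K array over S: rows 1..F, columns 1..K; cell (j,k) is None (empty) or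
 Some t with t in S. Entries outside the index range are irrelevant.\<close>

definition is_PDA :: "'a set \<Rightarrow> nat \<Rightarrow> nat \<Rightarrow> nat \<Rightarrow> (nat \<Rightarrow> nat \<Rightarrow> 'a option) \<Rightarrow> bool" where
  "is_PDA S F K Z R \<longleftrightarrow>
     (\<forall>j\<in>{1..F}. \<forall>k\<in>{1..K}. \<forall>t. R j k = Some t \<longrightarrow> t \<in> S) \<and>
     (\<forall>k\<in>{1..K}. card {j\<in>{1..F}. R j k = None} = Z) \<and>
     (\<forall>t\<in>S. \<forall>j\<in>{1..F}. \<forall>k1\<in>{1..K}. \<forall>k2\<in>{1..K}.
         R j k1 = Some t \<longrightarrow> R j k2 = Some t \<longrightarrow> k1 = k2) \<and>
     (\<forall>t\<in>S. \<forall>k\<in>{1..K}. \<forall>j1\<in>{1..F}. \<forall>j2\<in>{1..F}.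
         R j1 k = Some t \<longrightarrow> R j2 k = Some t \<longrightarrow> j1 = j2) \<and>
     (\<forall>t\<in>S. \<forall>j1\<in>{1..F}. \<forall>j2\<in>{1..F}. \<forall>k1\<in>{1..K}. \<forall>k2\<in>{1..K}.
         (j1, k1) \<noteq> (j2, k2) \<longrightarrow> R j1 k1 = Some t \<longrightarrow> R j2 k2 = Some t \<longrightarrow>
         R j1 k2 = None \<and> R j2 k1 = None)"

text \<open>s(F,K,Z): minimum size of a finite symbol set S admitting an S-PDA(F,K,Z).
 Symbol sets are taken as finite sets of naturals (any finite set can be relabelled).\<close>

definition s_PDA :: "nat \<Rightarrow> nat \<Rightarrow> nat \<Rightarrow> nat" where
  "s_PDA F K Z = (LEAST n. \<exists>(S::nat set) R. finite S \<and> card S = n \<and> is_PDA S F K Z R)"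

end

theory Submission
  imports Defs
begin

lemma enc_inj:
  fixes a b c d F :: nat
  assumes "a * (F+1) + b = c * (F+1) + d" "b \<le> F" "d \<le> F"
  shows "a = c \<and> b = d"
proof -
  have "(b + a * (F+1)) mod (F+1) = b mod (F+1)" by (rule mod_mult_self1)
  then have 1: "(a * (F+1) + b) mod (F+1) = b" using assms(2) by (simp add: add.commute)
  have "(d + c * (F+1)) mod (F+1) = d mod (F+1)" by (rule mod_mult_self1)
  then have 2: "(c * (F+1) + d) mod (F+1) = d" using assms(3) by (simp add: add.commute)
  have bd: "b = d" using 1 2 assms(1) by simp
  then have "a * (F+1) = c * (F+1)" using assms(1) by simp
  then show ?thesis using bd mult_right_cancel[of "F+1" a c] by linarith
qed

definition encR :: "nat \<Rightarrow> nat \<Rightarrow> nat \<Rightarrow> nat option" where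
  "encR F j k = (if j = k then None else Some (min j k * (F+1) + max j k))"

lemma enc_eq:
  fixes j1 k1 j2 k2 F :: nat
  assumes "j1 \<in> {1..F}" "k1 \<in> {1..F}" "j2 \<in> {1..F}" "k2 \<in> {1..F}"
    "min j1 k1 * (F+1) + max j1 k1 = min j2 k2 * (F+1) + max j2 k2"
  shows "(j1 = j2 \<and> k1 = k2) \<or> (j1 = k2 \<and> k1 = j2)"
proof -
  have "min j1 k1 = min j2 k2 \<and> max j1 k1 = max j2 k2"
    using enc_inj[OF assms(5)] assms by auto
  then show ?thesis by (auto simp: min_def max_def split: if_splits)
qed

lemma upper_PDA:
  "is_PDA {min j k * (F+1) + max j k | j k. j \<in> {1..F} \<and> k \<in> {1..F} \<and> j \<noteq> k} F F 1 (encR F)"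
proof -
  have col: "{j\<in>{1..F}. encR F j k = None} = {k}" if "k \<in> {1..F}" for k
    using that by (auto simp: encR_def split: if_splits)
  show ?thesis
    unfolding is_PDA_def
  proof (intro conjI ballI allI impI)
    fix j k t assume "j \<in> {1..F}" "k \<in> {1..F}" "encR F j k = Some t"
    then show "t \<in> {min j k * (F+1) + max j k | j k. j \<in> {1..F} \<and> k \<in> {1..F} \<and> j \<noteq> k}"
      by (auto simp: encR_def split: if_splits)
  next
    fix k :: nat assume "k \<in> {1..F}"
    then show "card {j\<in>{1..F}. encR F j k = None} = 1" using col by simp
  next
    fix t j k1 k2 assume a: "j \<in> {1..F}" "k1 \<in> {1..F}" "k2 \<in> {1..F}"
      "encR F j k1 = Some t" "encR F j k2 = Some t"
    then have "min j k1 * (F+1) + max j k1 = min j k2 * (F+1) + max j k2" "j \<noteq> k1" "j \<noteq> k2"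
      by (auto simp: encR_def split: if_splits)
    then show "k1 = k2" using enc_eq[of j F k1 j k2] a by auto
  next
    fix t k j1 j2 assume a: "k \<in> {1..F}" "j1 \<in> {1..F}" "j2 \<in> {1..F}"
      "encR F j1 k = Some t" "encR F j2 k = Some t"
    then have "min j1 k * (F+1) + max j1 k = min j2 k * (F+1) + max j2 k" "j1 \<noteq> k" "j2 \<noteq> k"
      by (auto simp: encR_def split: if_splits)
    then show "j1 = j2" using enc_eq[of j1 F k j2 k] a by auto
  next
    fix t j1 j2 k1 k2 assume a: "j1 \<in> {1..F}" "j2 \<in> {1..F}" "k1 \<in> {1..F}" "k2 \<in> {1..F}"
      "(j1, k1) \<noteq> (j2, k2)" "encR F j1 k1 = Some t" "encR F j2 k2 = Some t"
    then have "min j1 k1 * (F+1) + max j1 k1 = min j2 k2 * (F+1) + max j2 k2"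
      by (auto simp: encR_def split: if_splits)
    then have "j1 = k2 \<and> k1 = j2" using enc_eq[of j1 F k1 j2 k2] a by auto
    then show "encR F j1 k2 = None" by (auto simp add: encR_def)
  next
    fix t j1 j2 k1 k2 assume a: "j1 \<in> {1..F}" "j2 \<in> {1..F}" "k1 \<in> {1..F}" "k2 \<in> {1..F}"
      "(j1, k1) \<noteq> (j2, k2)" "encR F j1 k1 = Some t" "encR F j2 k2 = Some t"
    then have "min j1 k1 * (F+1) + max j1 k1 = min j2 k2 * (F+1) + max j2 k2"
      by (auto simp: encR_def split: if_splits)
    then have "j1 = k2 \<and> k1 = j2" using enc_eq[of j1 F k1 j2 k2] a by auto
    then show "encR F j2 k1 = None" by (auto simp add: encR_def)
  qed
qed

lemma upper_card:
  "card {min j k * (F+1) + max j k | j k. j \<in> {1..F} \<and> k \<in> {1..F} \<and> j \<noteq> k} = F * (F - 1) div 2"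
proof -
  let ?P = "{A. A \<subseteq> {1..F} \<and> card A = (2::nat)}"
  let ?g = "\<lambda>A. Min A * (F+1) + Max A"
  have eq: "{min j k * (F+1) + max j k | j k. j \<in> {1..F} \<and> k \<in> {1..F} \<and> j \<noteq> k} = ?g ` ?P"
  proof
    show "{min j k * (F+1) + max j k | j k. j \<in> {1..F} \<and> k \<in> {1..F} \<and> j \<noteq> k} \<subseteq> ?g ` ?P"
    proof
      fix x assume "x \<in> {min j k * (F+1) + max j k | j k. j \<in> {1..F} \<and> k \<in> {1..F} \<and> j \<noteq> k}"
      then obtain j k where jk: "x = min j k * (F+1) + max j k" "j \<in> {1..F}" "k \<in> {1..F}" "j \<noteq> k" by blast
      have "{j,k} \<in> ?P" using jk by auto
      moreover have "x = ?g {j,k}" using jk by (simp add: min_def max_def)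
      ultimately show "x \<in> ?g ` ?P" by blast
    qed
  next
    show "?g ` ?P \<subseteq> {min j k * (F+1) + max j k | j k. j \<in> {1..F} \<and> k \<in> {1..F} \<and> j \<noteq> k}"
    proof
      fix x assume "x \<in> ?g ` ?P"
      then obtain A where A: "A \<in> ?P" "x = ?g A" by blast
      then obtain j k where "A = {j,k}" "j \<noteq> k" by (auto simp: card_2_iff)
      with A show "x \<in> {min j k * (F+1) + max j k | j k. j \<in> {1..F} \<and> k \<in> {1..F} \<and> j \<noteq> k}"
        by (auto simp: min_def max_def)
    qed
  qed
  have inj: "inj_on ?g ?P"
  proof (rule inj_onI)
    fix A B assume A: "A \<in> ?P" and B: "B \<in> ?P" and e: "?g A = ?g B"
    obtain a1 a2 where Aa: "A = {a1,a2}" "a1 < a2"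
      using A by (auto simp: card_2_iff) (metis insert_commute linorder_neqE_nat)
    obtain b1 b2 where Bb: "B = {b1,b2}" "b1 < b2"
      using B by (auto simp: card_2_iff) (metis insert_commute linorder_neqE_nat)
    have "a2 \<le> F" "b2 \<le> F" using A B Aa Bb by auto
    moreover have "a1 * (F+1) + a2 = b1 * (F+1) + b2" using e Aa Bb by simp
    ultimately have "a1 = b1 \<and> a2 = b2" using enc_inj by blast
    then show "A = B" using Aa Bb by simp
  qed
  have "card (?g ` ?P) = card ?P" using card_image[OF inj] .
  also have "\<dots> = F choose 2" using n_subsets[of "{1..F}" 2] by simp
  also have "\<dots> = F * (F - 1) div 2" by (rule choose_two)
  finally show ?thesis using eq by simp
qed

lemma card_le2:
  assumes "finite A" "\<forall>x\<in>A. \<forall>y\<in>A. \<forall>z\<in>A. x = y \<or> x = z \<or> y = z"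
  shows "card A \<le> 2"
proof (cases "A = {}")
  case True then show ?thesis by simp
next
  case False
  then obtain a where a: "a \<in> A" by blast
  show ?thesis
  proof (cases "A - {a} = {}")
    case True
    then have "A \<subseteq> {a}" by blast
    then have "card A \<le> card {a}" by (intro card_mono) auto
    then show ?thesis by simp
  next
    case False
    then obtain b where b: "b \<in> A" "b \<noteq> a" by blast
    have "A \<subseteq> {a,b}" using assms(2) a b by blast
    then have "card A \<le> card {a,b}" by (intro card_mono) auto
    also have "\<dots> \<le> 2" by (simp add: card_insert_if)
    finally show ?thesis .
  qed
qed

lemma lower:
  fixes S :: "'a set"
  assumes fin: "finite S" and P: "is_PDA S F F 1 R"
  shows "F * (F - 1) \<le> 2 * card S"
proof -
  note D = P[unfolded is_PDA_def]
  have inS: "\<And>j k t. j \<in> {1..F} \<Longrightarrow> k \<in> {1..F} \<Longrightarrow> R j k = Some t \<Longrightarrow> t \<in> S"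
    using D by blast
  have colc: "\<And>k. k \<in> {1..F} \<Longrightarrow> card {j\<in>{1..F}. R j k = None} = 1" using D by blast
  have rowu: "\<And>t j k1 k2. t \<in> S \<Longrightarrow> j \<in> {1..F} \<Longrightarrow> k1 \<in> {1..F} \<Longrightarrow> k2 \<in> {1..F} \<Longrightarrow>
      R j k1 = Some t \<Longrightarrow> R j k2 = Some t \<Longrightarrow> k1 = k2" using D by blast
  have cross: "\<And>t j1 j2 k1 k2. t \<in> S \<Longrightarrow> j1 \<in> {1..F} \<Longrightarrow> j2 \<in> {1..F} \<Longrightarrow> k1 \<in> {1..F} \<Longrightarrow> k2 \<in> {1..F} \<Longrightarrow>
      (j1, k1) \<noteq> (j2, k2) \<Longrightarrow> R j1 k1 = Some t \<Longrightarrow> R j2 k2 = Some t \<Longrightarrow> R j1 k2 = None"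
    using D by blast
  define C where "C = (SIGMA k:{1..F}. {j\<in>{1..F}. R j k \<noteq> None})"
  have cardcol: "card {j\<in>{1..F}. R j k \<noteq> None} = F - 1" if k: "k \<in> {1..F}" for k
  proof -
    have "{j\<in>{1..F}. R j k \<noteq> None} = {1..F} - {j\<in>{1..F}. R j k = None}" by auto
    moreover have "card ({1..F} - {j\<in>{1..F}. R j k = None}) = card {1..F} - card {j\<in>{1..F}. R j k = None}"
      by (rule card_Diff_subset) auto
    ultimately have "card {j\<in>{1..F}. R j k \<noteq> None} = card {1..F} - card {j\<in>{1..F}. R j k = None}"
      by simp
    then show ?thesis using colc[OF k] by simp
  qed
  have "card C = (\<Sum>k\<in>{1..F}. card {j\<in>{1..F}. R j k \<noteq> None})"
    unfolding C_def by (rule card_SigmaI) auto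
  also have "\<dots> = (\<Sum>k\<in>{1..F}. F - 1)" by (rule sum.cong) (use cardcol in blast)+
  finally have cardC: "card C = F * (F - 1)" by simp
  have finC: "finite C" unfolding C_def by auto
  define fib where "fib t = {c\<in>C. R (snd c) (fst c) = Some t}" for t
  have sub: "C \<subseteq> (\<Union>t\<in>S. fib t)"
  proof
    fix c assume c: "c \<in> C"
    then obtain k j where kj: "c = (k,j)" "k \<in> {1..F}" "j \<in> {1..F}" "R j k \<noteq> None"
      unfolding C_def by blast
    then obtain t where "R j k = Some t" by blast
    with kj c inS show "c \<in> (\<Union>t\<in>S. fib t)" unfolding fib_def by force
  qed
  have fib2: "card (fib t) \<le> 2" if t: "t \<in> S" for t
  proof (rule card_le2)
    show "finite (fib t)" using finC unfolding fib_def by simp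
    show "\<forall>x\<in>fib t. \<forall>y\<in>fib t. \<forall>z\<in>fib t. x = y \<or> x = z \<or> y = z"
    proof (intro ballI, rule ccontr)
      fix x y z assume xyz: "x \<in> fib t" "y \<in> fib t" "z \<in> fib t" and nd: "\<not> (x = y \<or> x = z \<or> y = z)"
      obtain k1 j1 where 1: "x = (k1,j1)" "k1 \<in> {1..F}" "j1 \<in> {1..F}" "R j1 k1 = Some t"
        using xyz(1) unfolding fib_def C_def by auto
      obtain k2 j2 where 2: "y = (k2,j2)" "k2 \<in> {1..F}" "j2 \<in> {1..F}" "R j2 k2 = Some t"
        using xyz(2) unfolding fib_def C_def by auto
      obtain k3 j3 where 3: "z = (k3,j3)" "k3 \<in> {1..F}" "j3 \<in> {1..F}" "R j3 k3 = Some t"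
        using xyz(3) unfolding fib_def C_def by auto
      have n1: "R j1 k2 = None" using cross[of t j1 j2 k1 k2] t 1 2 nd by auto
      have n3: "R j3 k2 = None" using cross[of t j3 j2 k3 k2] t 3 2 nd by auto
      have ne: "j1 \<noteq> j3"
      proof
        assume "j1 = j3"
        then have "k1 = k3" using rowu[of t j1 k1 k3] t 1 3 by auto
        then show False using \<open>j1 = j3\<close> 1 3 nd by auto
      qed
      have "{j1, j3} \<subseteq> {j\<in>{1..F}. R j k2 = None}" using n1 n3 1 3 by auto
      then have "card {j1, j3} \<le> card {j\<in>{1..F}. R j k2 = None}" by (intro card_mono) auto
      then show False using colc[OF 2(2)] ne by simp
    qed
  qed
  have "card C \<le> card (\<Union>t\<in>S. fib t)"
    by (rule card_mono) (use fin finC sub in \<open>auto simp: fib_def\<close>)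
  also have "\<dots> \<le> (\<Sum>t\<in>S. card (fib t))" by (rule card_UN_le[OF fin])
  also have "\<dots> \<le> (\<Sum>t\<in>S. 2)" by (rule sum_mono) (use fib2 in auto)
  finally show ?thesis using cardC by simp
qed

theorem mainTheorem5:
  fixes F :: nat
  assumes "F \<ge> 2"
  shows "s_PDA F F 1 = F * (F - 1) div 2"
  unfolding s_PDA_def
proof (rule Least_equality)
  show "\<exists>(S::nat set) R. finite S \<and> card S = F * (F - 1) div 2 \<and> is_PDA S F F 1 R"
  proof (intro exI conjI)
    show "is_PDA {min j k * (F+1) + max j k | j k. j \<in> {1..F} \<and> k \<in> {1..F} \<and> j \<noteq> k} F F 1 (encR F)"
      by (rule upper_PDA)
    show "card {min j k * (F+1) + max j k | j k. j \<in> {1..F} \<and> k \<in> {1..F} \<and> j \<noteq> k} = F * (F - 1) div 2"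
      by (rule upper_card)
    have "{min j k * (F+1) + max j k | j k. j \<in> {1..F} \<and> k \<in> {1..F} \<and> j \<noteq> k}
        \<subseteq> (\<lambda>(j,k). min j k * (F+1) + max j k) ` ({1..F} \<times> {1..F})" by auto
    then show "finite {min j k * (F+1) + max j k | j k. j \<in> {1..F} \<and> k \<in> {1..F} \<and> j \<noteq> k}"
      by (rule finite_subset) auto
  qed
next
  fix y assume "\<exists>(S::nat set) R. finite S \<and> card S = y \<and> is_PDA S F F 1 R"
  then obtain S :: "nat set" and R where "finite S" "card S = y" "is_PDA S F F 1 R" by blast
  then have "F * (F - 1) \<le> 2 * y" using lower by blast
  then show "F * (F - 1) div 2 \<le> y" by linarith
qed

end
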